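(* Let $k$ be a field of characteristic $0$, let $\mathfrak n=\langle X,Z_1,Z_2\rangle$ be the $3$-dimensional Heisenberg GNLA with $\deg X=\deg Z_1=-1$, $\deg Z_2=-2$ and only non-zero bracket $[X,Z_1]=Z_2$, let $W=\langle Z_1\rangle\subset\mathfrak n_{-1}$, and for $s\ge2$ let $V=\langle Y_1,\dots,Y_s\rangle$, $\deg Y_i=-i$, be the $\mathfrak n$-module with $X.Y_i=Y_{i+1}$ ($i<s$), $X.Y_s=0$, and $Z_1,Z_2$ acting trivially. Then every special extension $\mathfrak m$ of $\mathfrak n$ by $V$ is isomorphic (as a graded Lie algebra) either to the semidirect product $\mathfrak n\ltimes V$ (non-zero brackets $[X,Z_1]=Z_2$, $[X,Y_i]=Y_{i+1}$, $i=1,\dots,s-1$), or, only when $s=3$, to the $6$-dimensional graded Lie algebra $\langle X,Z_1,Z_2,Y_1,Y_2,Y_3\rangle$ with non-zero brackets $[X,Y_1]=Y_2$, $[X,Y_2]=Y_3$, $[X,Z_1]=Z_2$, $[Z_1,Z_2]=Y_3$; this latter algebra is not isomorphic to the semidirect product. In particular, up to isomorphism there is exactly one non-trivial special extension of the $3$-dimensional Heisenberg algebra.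
   Context: A GNLA is a negatively graded Lie algebra $\bigoplus_{i\ge1}\mathfrak n_{-i}$ generated by $\mathfrak n_{-1}$. A special extension of $\mathfrak n$ by the graded $\mathfrak n$-module $V$ is a graded Lie algebra $\mathfrak m$ fitting into an exact sequence of graded Lie algebras $0\to V\to\mathfrak m\to\mathfrak n\to0$ in which $V$ is an abelian ideal and the action of $\mathfrak n=\mathfrak m/V$ on $V$ induced by the bracket is the given module structure; equivalently $\mathfrak m=\mathfrak n\oplus V$ with bracket $[(x_1,v_1),(x_2,v_2)]=([x_1,x_2],x_1.v_2-x_2.v_1+\alpha(x_1,x_2))$ for some degree-preserving $2$-cocycle $\alpha:\wedge^2\mathfrak n\to V$. *)

theory Defs
  imports Main
begin

text \<open>
An element of the Heisenberg GNLA n = <X, Z1, Z2> is a function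
x :: nat => 'k supported on {0,1,2}: x 0, x 1, x 2 are the coefficients of
X, Z1, Z2.  An element of V = <Y1,...,Ys> is a function v :: nat => 'k
supported on {1..s}: v i is the coefficient of Y_i.
\<close>

definition vadd :: "(nat \<Rightarrow> 'k::field) \<Rightarrow> (nat \<Rightarrow> 'k) \<Rightarrow> nat \<Rightarrow> 'k" where
  "vadd f g = (\<lambda>i. f i + g i)"

definition vsmul :: "'k::field \<Rightarrow> (nat \<Rightarrow> 'k) \<Rightarrow> nat \<Rightarrow> 'k" where
  "vsmul a f = (\<lambda>i. a * f i)"

definition vzero :: "nat \<Rightarrow> 'k::field" where
  "vzero = (\<lambda>i. 0)"

definition padd :: "(nat \<Rightarrow> 'k::field) \<times> (nat \<Rightarrow> 'k) \<Rightarrow> (nat \<Rightarrow> 'k) \<times> (nat \<Rightarrow> 'k)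
                     \<Rightarrow> (nat \<Rightarrow> 'k) \<times> (nat \<Rightarrow> 'k)" where
  "padd p q = (vadd (fst p) (fst q), vadd (snd p) (snd q))"

definition psmul :: "'k::field \<Rightarrow> (nat \<Rightarrow> 'k) \<times> (nat \<Rightarrow> 'k) \<Rightarrow> (nat \<Rightarrow> 'k) \<times> (nat \<Rightarrow> 'k)" where
  "psmul a p = (vsmul a (fst p), vsmul a (snd p))"

definition Nsp :: "(nat \<Rightarrow> 'k::field) set" where
  "Nsp = {x. \<forall>i. i \<notin> {0,1,2} \<longrightarrow> x i = 0}"

definition Vsp :: "nat \<Rightarrow> (nat \<Rightarrow> 'k::field) set" where
  "Vsp s = {v. \<forall>i. i \<notin> {1..s} \<longrightarrow> v i = 0}"

definition Msp :: "nat \<Rightarrow> ((nat \<Rightarrow> 'k::field) \<times> (nat \<Rightarrow> 'k)) set" where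
  "Msp s = Nsp \<times> Vsp s"

definition degN :: "nat \<Rightarrow> int" where
  "degN i = (if i = 2 then -2 else -1)"

definition degV :: "nat \<Rightarrow> int" where
  "degV i = - int i"

definition homN :: "int \<Rightarrow> (nat \<Rightarrow> 'k::field) set" where
  "homN d = {x \<in> Nsp. \<forall>i. x i \<noteq> 0 \<longrightarrow> degN i = d}"

definition homV :: "nat \<Rightarrow> int \<Rightarrow> (nat \<Rightarrow> 'k::field) set" where
  "homV s d = {v \<in> Vsp s. \<forall>i. v i \<noteq> 0 \<longrightarrow> degV i = d}"

definition homM :: "nat \<Rightarrow> int \<Rightarrow> ((nat \<Rightarrow> 'k::field) \<times> (nat \<Rightarrow> 'k)) set" where
  "homM s d = homN d \<times> homV s d"

definition brN :: "(nat \<Rightarrow> 'k::field) \<Rightarrow> (nat \<Rightarrow> 'k) \<Rightarrow> nat \<Rightarrow> 'k" where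
  "brN x y = (\<lambda>i. if i = 2 then x 0 * y 1 - x 1 * y 0 else 0)"

definition actV :: "nat \<Rightarrow> (nat \<Rightarrow> 'k::field) \<Rightarrow> (nat \<Rightarrow> 'k) \<Rightarrow> nat \<Rightarrow> 'k" where
  "actV s x v = (\<lambda>i. if 2 \<le> i \<and> i \<le> s then x 0 * v (i - 1) else 0)"

definition special_cocycle :: "nat \<Rightarrow> ((nat \<Rightarrow> 'k::field) \<Rightarrow> (nat \<Rightarrow> 'k) \<Rightarrow> nat \<Rightarrow> 'k) \<Rightarrow> bool" where
  "special_cocycle s \<alpha> \<longleftrightarrow>
     (\<forall>x\<in>Nsp. \<forall>y\<in>Nsp. \<alpha> x y \<in> Vsp s) \<and>
     (\<forall>x\<in>Nsp. \<forall>y\<in>Nsp. \<forall>z\<in>Nsp. \<alpha> (vadd x y) z = vadd (\<alpha> x z) (\<alpha> y z)) \<and>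
     (\<forall>a. \<forall>x\<in>Nsp. \<forall>z\<in>Nsp. \<alpha> (vsmul a x) z = vsmul a (\<alpha> x z)) \<and>
     (\<forall>x\<in>Nsp. \<forall>y\<in>Nsp. \<forall>z\<in>Nsp. \<alpha> z (vadd x y) = vadd (\<alpha> z x) (\<alpha> z y)) \<and>
     (\<forall>a. \<forall>x\<in>Nsp. \<forall>z\<in>Nsp. \<alpha> z (vsmul a x) = vsmul a (\<alpha> z x)) \<and>
     (\<forall>x\<in>Nsp. \<alpha> x x = vzero) \<and>
     (\<forall>d1 d2 x y. x \<in> homN d1 \<longrightarrow> y \<in> homN d2 \<longrightarrow> \<alpha> x y \<in> homV s (d1 + d2)) \<and>
     (\<forall>x\<in>Nsp. \<forall>y\<in>Nsp. \<forall>z\<in>Nsp.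
        (\<lambda>i. actV s x (\<alpha> y z) i - actV s y (\<alpha> x z) i + actV s z (\<alpha> x y) i
             - \<alpha> (brN x y) z i + \<alpha> (brN x z) y i - \<alpha> (brN y z) x i) = vzero)"

definition ext_br :: "nat \<Rightarrow> ((nat \<Rightarrow> 'k::field) \<Rightarrow> (nat \<Rightarrow> 'k) \<Rightarrow> nat \<Rightarrow> 'k)
    \<Rightarrow> (nat \<Rightarrow> 'k) \<times> (nat \<Rightarrow> 'k) \<Rightarrow> (nat \<Rightarrow> 'k) \<times> (nat \<Rightarrow> 'k) \<Rightarrow> (nat \<Rightarrow> 'k) \<times> (nat \<Rightarrow> 'k)" where
  "ext_br s \<alpha> p q =
     (brN (fst p) (fst q),
      (\<lambda>i. actV s (fst p) (snd q) i - actV s (fst q) (snd p) i + \<alpha> (fst p) (fst q) i))"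

definition sd_br :: "nat \<Rightarrow> (nat \<Rightarrow> 'k::field) \<times> (nat \<Rightarrow> 'k) \<Rightarrow> (nat \<Rightarrow> 'k) \<times> (nat \<Rightarrow> 'k)
    \<Rightarrow> (nat \<Rightarrow> 'k) \<times> (nat \<Rightarrow> 'k)" where
  "sd_br s = ext_br s (\<lambda>x y. vzero)"

text \<open>The 6-dimensional algebra <X,Z1,Z2,Y1,Y2,Y3> with non-zero brackets
  [X,Y1]=Y2, [X,Y2]=Y3, [X,Z1]=Z2, [Z1,Z2]=Y3 (same underlying graded
  space as n (+) V for s = 3), given by its structure constants.\<close>

definition L6_br :: "(nat \<Rightarrow> 'k::field) \<times> (nat \<Rightarrow> 'k) \<Rightarrow> (nat \<Rightarrow> 'k) \<times> (nat \<Rightarrow> 'k)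
    \<Rightarrow> (nat \<Rightarrow> 'k) \<times> (nat \<Rightarrow> 'k)" where
  "L6_br p q =
     (let x = fst p; v = snd p; y = fst q; w = snd q in
      ((\<lambda>i. if i = 2 then x 0 * y 1 - x 1 * y 0 else 0),
       (\<lambda>i. if i = 2 then x 0 * w 1 - y 0 * v 1
            else if i = 3 then x 0 * w 2 - y 0 * v 2 + x 1 * y 2 - x 2 * y 1
            else 0)))"

definition gl_iso :: "nat \<Rightarrow> ((nat \<Rightarrow> 'k::field) \<times> (nat \<Rightarrow> 'k) \<Rightarrow> (nat \<Rightarrow> 'k) \<times> (nat \<Rightarrow> 'k) \<Rightarrow> (nat \<Rightarrow> 'k) \<times> (nat \<Rightarrow> 'k))
   \<Rightarrow> ((nat \<Rightarrow> 'k) \<times> (nat \<Rightarrow> 'k) \<Rightarrow> (nat \<Rightarrow> 'k) \<times> (nat \<Rightarrow> 'k) \<Rightarrow> (nat \<Rightarrow> 'k) \<times> (nat \<Rightarrow> 'k))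
   \<Rightarrow> ((nat \<Rightarrow> 'k) \<times> (nat \<Rightarrow> 'k) \<Rightarrow> (nat \<Rightarrow> 'k) \<times> (nat \<Rightarrow> 'k)) \<Rightarrow> bool" where
  "gl_iso s br1 br2 \<phi> \<longleftrightarrow>
     bij_betw \<phi> (Msp s) (Msp s) \<and>
     (\<forall>p\<in>Msp s. \<forall>q\<in>Msp s. \<phi> (padd p q) = padd (\<phi> p) (\<phi> q)) \<and>
     (\<forall>a. \<forall>p\<in>Msp s. \<phi> (psmul a p) = psmul a (\<phi> p)) \<and>
     (\<forall>d. \<forall>p\<in>homM s d. \<phi> p \<in> homM s d) \<and>
     (\<forall>p\<in>Msp s. \<forall>q\<in>Msp s. \<phi> (br1 p q) = br2 (\<phi> p) (\<phi> q))"

definition gl_isomorphic :: "nat \<Rightarrow> ((nat \<Rightarrow> 'k::field) \<times> (nat \<Rightarrow> 'k) \<Rightarrow> (nat \<Rightarrow> 'k) \<times> (nat \<Rightarrow> 'k) \<Rightarrow> (nat \<Rightarrow> 'k) \<times> (nat \<Rightarrow> 'k))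
   \<Rightarrow> ((nat \<Rightarrow> 'k) \<times> (nat \<Rightarrow> 'k) \<Rightarrow> (nat \<Rightarrow> 'k) \<times> (nat \<Rightarrow> 'k) \<Rightarrow> (nat \<Rightarrow> 'k) \<times> (nat \<Rightarrow> 'k)) \<Rightarrow> bool" where
  "gl_isomorphic s br1 br2 \<longleftrightarrow> (\<exists>\<phi>. gl_iso s br1 br2 \<phi>)"

end

theory Submission
  imports Defs
begin



definition eX :: "nat \<Rightarrow> 'k::field" where "eX = (\<lambda>i. if i = 0 then 1 else 0)"
definition eZ1 :: "nat \<Rightarrow> 'k::field" where "eZ1 = (\<lambda>i. if i = 1 then 1 else 0)"
definition eZ2 :: "nat \<Rightarrow> 'k::field" where "eZ2 = (\<lambda>i. if i = 2 then 1 else 0)"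

lemma Nsp_iff: "x \<in> Nsp \<longleftrightarrow> (\<forall>i>2. x i = 0)"
  by (auto simp: Nsp_def)

lemma e_Nsp[simp]: "eX \<in> Nsp" "eZ1 \<in> Nsp" "eZ2 \<in> Nsp"
  by (auto simp: Nsp_iff eX_def eZ1_def eZ2_def)

lemma vadd_Nsp[simp]: "x \<in> Nsp \<Longrightarrow> y \<in> Nsp \<Longrightarrow> vadd x y \<in> Nsp"
  and vsmul_Nsp[simp]: "x \<in> Nsp \<Longrightarrow> vsmul a x \<in> Nsp"
  and brN_Nsp[simp]: "brN x y \<in> Nsp"
  by (auto simp: Nsp_iff vadd_def vsmul_def brN_def)

lemma decomp: "x \<in> Nsp \<Longrightarrow> x = vadd (vsmul (x 0) eX) (vadd (vsmul (x 1) eZ1) (vsmul (x 2) eZ2))"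
  apply (rule ext)
  subgoal for i by (cases "i = 0 \<or> i = 1 \<or> i = 2") (auto simp: Nsp_iff vadd_def vsmul_def eX_def eZ1_def eZ2_def)
  done

lemma lin1:
  assumes "special_cocycle s \<alpha>" "x\<in>Nsp" "z\<in>Nsp"
  shows "\<alpha> x z i = x 0 * \<alpha> eX z i + x 1 * \<alpha> eZ1 z i + x 2 * \<alpha> eZ2 z i"
proof -
  from assms(1) have add: "\<forall>x\<in>Nsp. \<forall>y\<in>Nsp. \<forall>z\<in>Nsp. \<alpha> (vadd x y) z = vadd (\<alpha> x z) (\<alpha> y z)"
   and sm: "\<forall>a. \<forall>x\<in>Nsp. \<forall>z\<in>Nsp. \<alpha> (vsmul a x) z = vsmul a (\<alpha> x z)"
    by (simp_all add: special_cocycle_def)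
  have "\<alpha> x z = \<alpha> (vadd (vsmul (x 0) eX) (vadd (vsmul (x 1) eZ1) (vsmul (x 2) eZ2))) z"
    using decomp assms(2) by metis
  also have "\<dots> = vadd (vsmul (x 0) (\<alpha> eX z)) (vadd (vsmul (x 1) (\<alpha> eZ1 z)) (vsmul (x 2) (\<alpha> eZ2 z)))"
    using assms(3) by (simp add: add[rule_format] sm[rule_format])
  finally show ?thesis by (simp add: vadd_def vsmul_def)
qed

lemma lin2:
  assumes "special_cocycle s \<alpha>" "x\<in>Nsp" "z\<in>Nsp"
  shows "\<alpha> z x i = x 0 * \<alpha> z eX i + x 1 * \<alpha> z eZ1 i + x 2 * \<alpha> z eZ2 i"
proof -
  from assms(1) have add: "\<forall>x\<in>Nsp. \<forall>y\<in>Nsp. \<forall>z\<in>Nsp. \<alpha> z (vadd x y) = vadd (\<alpha> z x) (\<alpha> z y)"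
   and sm: "\<forall>a. \<forall>x\<in>Nsp. \<forall>z\<in>Nsp. \<alpha> z (vsmul a x) = vsmul a (\<alpha> z x)"
    by (simp_all add: special_cocycle_def)
  have "\<alpha> z x = \<alpha> z (vadd (vsmul (x 0) eX) (vadd (vsmul (x 1) eZ1) (vsmul (x 2) eZ2)))"
    using decomp assms(2) by metis
  also have "\<dots> = vadd (vsmul (x 0) (\<alpha> z eX)) (vadd (vsmul (x 1) (\<alpha> z eZ1)) (vsmul (x 2) (\<alpha> z eZ2)))"
    using assms(3) by (simp add: add[rule_format] sm[rule_format])
  finally show ?thesis by (simp add: vadd_def vsmul_def)
qed

lemma antisym:
  assumes "special_cocycle s \<alpha>" "x\<in>Nsp" "y\<in>Nsp"
  shows "\<alpha> x y i = - \<alpha> y x i"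
proof -
  from assms(1) have add1: "\<forall>x\<in>Nsp. \<forall>y\<in>Nsp. \<forall>z\<in>Nsp. \<alpha> (vadd x y) z = vadd (\<alpha> x z) (\<alpha> y z)"
   and add2: "\<forall>x\<in>Nsp. \<forall>y\<in>Nsp. \<forall>z\<in>Nsp. \<alpha> z (vadd x y) = vadd (\<alpha> z x) (\<alpha> z y)"
   and al: "\<forall>x\<in>Nsp. \<alpha> x x = vzero"
    by (simp_all add: special_cocycle_def)
  have "vzero = \<alpha> (vadd x y) (vadd x y)" using al assms vadd_Nsp by metis
  also have "\<dots> = vadd (vadd (\<alpha> x x) (\<alpha> y x)) (vadd (\<alpha> x y) (\<alpha> y y))"
    using assms by (simp add: add1[rule_format] add2[rule_format])
  finally have "vzero i = \<alpha> x y i + \<alpha> y x i" using al assms by (simp add: vadd_def vzero_def)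
  then show ?thesis by (simp add: vzero_def eq_neg_iff_add_eq_0)
qed

lemma expand:
  assumes "special_cocycle s \<alpha>" "x\<in>Nsp" "y\<in>Nsp"
  shows "\<alpha> x y i = (x 0 * y 1 - x 1 * y 0) * \<alpha> eX eZ1 i + (x 0 * y 2 - x 2 * y 0) * \<alpha> eX eZ2 i
                   + (x 1 * y 2 - x 2 * y 1) * \<alpha> eZ1 eZ2 i"
proof -
  have al: "\<alpha> e e i = 0" if "e \<in> Nsp" for e
    using assms(1) that by (simp add: special_cocycle_def vzero_def)
  show ?thesis
    using lin1[OF assms] lin2[OF assms(1) assms(3) e_Nsp(1)] lin2[OF assms(1) assms(3) e_Nsp(2)]
      lin2[OF assms(1) assms(3) e_Nsp(3)]
      antisym[OF assms(1) e_Nsp(1) e_Nsp(2)] antisym[OF assms(1) e_Nsp(1) e_Nsp(3)]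
      antisym[OF assms(1) e_Nsp(2) e_Nsp(3)] al[OF e_Nsp(1)] al[OF e_Nsp(2)] al[OF e_Nsp(3)]
    by (simp add: algebra_simps)
qed




definition FF :: "'k::field \<Rightarrow> 'k \<Rightarrow> (nat \<Rightarrow> 'k) \<Rightarrow> nat \<Rightarrow> 'k" where
  "FF q r x = (\<lambda>i. if i = 1 then q * x 1 else if i = 2 then r * x 2 else 0)"

definition phiF :: "'k::field \<Rightarrow> 'k \<Rightarrow> 'k \<Rightarrow> (nat \<Rightarrow> 'k) \<times> (nat \<Rightarrow> 'k) \<Rightarrow> (nat \<Rightarrow> 'k) \<times> (nat \<Rightarrow> 'k)" where
  "phiF q r d p = (fst p, \<lambda>i. (snd p i + FF q r (fst p) i) / d)"

definition psiF :: "'k::field \<Rightarrow> 'k \<Rightarrow> 'k \<Rightarrow> (nat \<Rightarrow> 'k) \<times> (nat \<Rightarrow> 'k) \<Rightarrow> (nat \<Rightarrow> 'k) \<times> (nat \<Rightarrow> 'k)" where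
  "psiF q r d p = (fst p, \<lambda>i. d * snd p i - FF q r (fst p) i)"

lemma Vsp_iff: "v \<in> Vsp s \<longleftrightarrow> (\<forall>i. (i = 0 \<or> s < i) \<longrightarrow> v i = 0)"
  by (auto simp: Vsp_def) (metis Suc_leI not_gr0)+

lemma iso_gen:
  fixes q :: "'k::field"
  assumes s2: "2 \<le> s" and d: "d \<noteq> 0"
    and br: "\<forall>p\<in>Msp s. \<forall>p'\<in>Msp s. phiF q r d (ext_br s \<alpha> p p') = T (phiF q r d p) (phiF q r d p')"
  shows "gl_iso s (ext_br s \<alpha>) T (phiF q r d)"
  unfolding gl_iso_def
proof (intro conjI)
  show "bij_betw (phiF q r d) (Msp s) (Msp s)"
  proof (rule bij_betw_byWitness[where f'="psiF q r d"])
    show "\<forall>a\<in>Msp s. psiF q r d (phiF q r d a) = a"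
      using d by (auto simp: psiF_def phiF_def)
    show "\<forall>a\<in>Msp s. phiF q r d (psiF q r d a) = a"
      using d by (auto simp: psiF_def phiF_def)
    show "phiF q r d ` Msp s \<subseteq> Msp s"
      using s2 by (auto simp: phiF_def Msp_def Vsp_iff FF_def)
    show "psiF q r d ` Msp s \<subseteq> Msp s"
      using s2 by (auto simp: psiF_def Msp_def Vsp_iff FF_def)
  qed
  show "\<forall>p\<in>Msp s. \<forall>p'\<in>Msp s. phiF q r d (padd p p') = padd (phiF q r d p) (phiF q r d p')"
    by (auto simp: phiF_def padd_def vadd_def FF_def add_divide_distrib algebra_simps)
  show "\<forall>a. \<forall>p\<in>Msp s. phiF q r d (psmul a p) = psmul a (phiF q r d p)"
    by (auto simp: phiF_def psmul_def vsmul_def FF_def algebra_simps)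
  show "\<forall>dd. \<forall>p\<in>homM s dd. phiF q r d p \<in> homM s dd"
  proof (intro allI ballI)
    fix dd and p :: "(nat \<Rightarrow> 'k) \<times> (nat \<Rightarrow> 'k)" assume p: "p \<in> homM s dd"
    obtain x v where pxv: "p = (x, v)" by (cases p)
    have x: "x \<in> homN dd" and v: "v \<in> homV s dd" using p pxv by (auto simp: homM_def)
    have "(\<lambda>i. (v i + FF q r x i) / d) \<in> homV s dd"
      unfolding homV_def
    proof (intro CollectI conjI allI impI)
      show "(\<lambda>i. (v i + FF q r x i) / d) \<in> Vsp s"
        using v s2 by (auto simp: homV_def Vsp_iff FF_def)
      fix i assume ne: "(v i + FF q r x i) / d \<noteq> 0"
      show "degV i = dd"
      proof (cases "v i = 0")
        case False then show ?thesis using v by (auto simp: homV_def)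
      next
        case True
        then have "FF q r x i \<noteq> 0" using ne by auto
        then have "(i = 1 \<and> x 1 \<noteq> 0) \<or> (i = 2 \<and> x 2 \<noteq> 0)" by (auto simp: FF_def split: if_splits)
        then show ?thesis using x by (auto simp: homN_def degN_def degV_def)
      qed
    qed
    then show "phiF q r d p \<in> homM s dd" using x pxv by (simp add: phiF_def homM_def)
  qed
  show "\<forall>p\<in>Msp s. \<forall>p'\<in>Msp s. phiF q r d (ext_br s \<alpha> p p') = T (phiF q r d p) (phiF q r d p')"
    by (rule br)
qed




lemma homN_e: "eX \<in> homN (-1)" "eZ1 \<in> homN (-1)" "eZ2 \<in> homN (-2)"
  by (auto simp: homN_def Nsp_iff eX_def eZ1_def eZ2_def degN_def split: if_splits)

lemma deg_vals:
  assumes "special_cocycle s \<alpha>"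
  shows "\<alpha> eX eZ1 i = (if i = 2 then \<alpha> eX eZ1 2 else 0)"
    and "\<alpha> eX eZ2 i = (if i = 3 then \<alpha> eX eZ2 3 else 0)"
    and "\<alpha> eZ1 eZ2 i = (if i = 3 then \<alpha> eZ1 eZ2 3 else 0)"
    and "s < 3 \<Longrightarrow> \<alpha> eX eZ2 3 = 0"
    and "s < 3 \<Longrightarrow> \<alpha> eZ1 eZ2 3 = 0"
proof -
  have D: "\<forall>d1 d2 x y. x \<in> homN d1 \<longrightarrow> y \<in> homN d2 \<longrightarrow> \<alpha> x y \<in> homV s (d1 + d2)"
    using assms by (simp add: special_cocycle_def)
  have 1: "\<alpha> eX eZ1 \<in> homV s (-2)" using D homN_e by fastforce
  have 2: "\<alpha> eX eZ2 \<in> homV s (-3)" using D homN_e by fastforce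
  have 3: "\<alpha> eZ1 eZ2 \<in> homV s (-3)" using D homN_e by fastforce
  show "\<alpha> eX eZ1 i = (if i = 2 then \<alpha> eX eZ1 2 else 0)"
    using 1 by (auto simp: homV_def degV_def)
  show "\<alpha> eX eZ2 i = (if i = 3 then \<alpha> eX eZ2 3 else 0)"
    using 2 by (auto simp: homV_def degV_def)
  show "\<alpha> eZ1 eZ2 i = (if i = 3 then \<alpha> eZ1 eZ2 3 else 0)"
    using 3 by (auto simp: homV_def degV_def)
  show "s < 3 \<Longrightarrow> \<alpha> eX eZ2 3 = 0"
    using 2 by (auto simp: homV_def Vsp_iff)
  show "s < 3 \<Longrightarrow> \<alpha> eZ1 eZ2 3 = 0"
    using 3 by (auto simp: homV_def Vsp_iff)
qed

lemma formula:
  assumes "special_cocycle s \<alpha>" "x \<in> Nsp" "y \<in> Nsp"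
  shows "\<alpha> x y i = (x 0 * y 1 - x 1 * y 0) * (if i = 2 then \<alpha> eX eZ1 2 else 0)
     + (x 0 * y 2 - x 2 * y 0) * (if i = 3 then \<alpha> eX eZ2 3 else 0)
     + (x 1 * y 2 - x 2 * y 1) * (if i = 3 then \<alpha> eZ1 eZ2 3 else 0)"
  using expand[OF assms, of i] deg_vals(1-3)[OF assms(1), of i] by simp

lemma c4:
  assumes "special_cocycle s \<alpha>" "4 \<le> s"
  shows "\<alpha> eZ1 eZ2 3 = 0"
proof -
  have C: "\<forall>x\<in>Nsp. \<forall>y\<in>Nsp. \<forall>z\<in>Nsp.
        (\<lambda>i. actV s x (\<alpha> y z) i - actV s y (\<alpha> x z) i + actV s z (\<alpha> x y) i
             - \<alpha> (brN x y) z i + \<alpha> (brN x z) y i - \<alpha> (brN y z) x i) = vzero"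
    using assms by (simp add: special_cocycle_def)
  have "(\<lambda>i. actV s eX (\<alpha> eZ1 eZ2) i - actV s eZ1 (\<alpha> eX eZ2) i + actV s eZ2 (\<alpha> eX eZ1) i
             - \<alpha> (brN eX eZ1) eZ2 i + \<alpha> (brN eX eZ2) eZ1 i - \<alpha> (brN eZ1 eZ2) eX i) 4 = vzero 4"
    using fun_cong[OF C[rule_format, OF e_Nsp(1) e_Nsp(2) e_Nsp(3)], of 4] by simp
  then show ?thesis
    using assms(2) formula[OF assms(1) brN_Nsp e_Nsp(3), of eX eZ1 4]
      formula[OF assms(1) brN_Nsp e_Nsp(2), of eX eZ2 4]
      formula[OF assms(1) brN_Nsp e_Nsp(1), of eZ1 eZ2 4]
    by (simp add: actV_def vzero_def eX_def eZ1_def eZ2_def brN_def)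
qed




lemma br_comp:
  fixes \<alpha> :: "(nat \<Rightarrow> 'k::field) \<Rightarrow> (nat \<Rightarrow> 'k) \<Rightarrow> nat \<Rightarrow> 'k"
    and T :: "(nat \<Rightarrow> 'k) \<times> (nat \<Rightarrow> 'k) \<Rightarrow> (nat \<Rightarrow> 'k) \<times> (nat \<Rightarrow> 'k) \<Rightarrow> (nat \<Rightarrow> 'k) \<times> (nat \<Rightarrow> 'k)"
  assumes s2: "2 \<le> s" and d: "d \<noteq> 0"
  and form: "\<And>x y i. x\<in>Nsp \<Longrightarrow> y\<in>Nsp \<Longrightarrow> \<alpha> x y i = (x 0 * y 1 - x 1 * y 0) * (if i = 2 then a else 0)
     + (x 0 * y 2 - x 2 * y 0) * (if i = 3 then b else 0)
     + (x 1 * y 2 - x 2 * y 1) * (if i = 3 then c else 0)"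
  and hb: "s < 3 \<Longrightarrow> b = 0"
  and hcs: "c \<noteq> 0 \<Longrightarrow> s = 3"
  and hT: "\<And>x v y w. x \<in> Nsp \<Longrightarrow> y \<in> Nsp \<Longrightarrow> T (x,v) (y,w) = (brN x y,
      \<lambda>i. actV s x w i - actV s y v i + (if i = 3 then (x 1 * y 2 - x 2 * y 1) * (c / d) else 0))"
  shows "\<forall>p\<in>Msp s. \<forall>p'\<in>Msp s. phiF (a+b) b d (ext_br s \<alpha> p p') = T (phiF (a+b) b d p) (phiF (a+b) b d p')"
proof (intro ballI)
  fix p p' :: "(nat \<Rightarrow> 'k) \<times> (nat \<Rightarrow> 'k)" assume p: "p \<in> Msp s" and p': "p' \<in> Msp s"
  obtain x v where pxv: "p = (x, v)" by (cases p)
  obtain y w where pyw: "p' = (y, w)" by (cases p')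
  have x: "x \<in> Nsp" and y: "y \<in> Nsp" using p p' pxv pyw by (auto simp: Msp_def)
  have "(\<lambda>i. (actV s x w i - actV s y v i + \<alpha> x y i + FF (a+b) b (brN x y) i) / d)
     = (\<lambda>i. actV s x (\<lambda>j. (w j + FF (a+b) b y j) / d) i - actV s y (\<lambda>j. (v j + FF (a+b) b x j) / d) i
           + (if i = 3 then (x 1 * y 2 - x 2 * y 1) * (c / d) else 0))"
  proof (rule ext)
    fix i :: nat
    consider "i = 0" | "i = 1" | "i = 2" | "i = 3" | "i \<ge> 4" by linarith
    then show "(actV s x w i - actV s y v i + \<alpha> x y i + FF (a+b) b (brN x y) i) / d
       = actV s x (\<lambda>j. (w j + FF (a+b) b y j) / d) i - actV s y (\<lambda>j. (v j + FF (a+b) b x j) / d) i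
           + (if i = 3 then (x 1 * y 2 - x 2 * y 1) * (c / d) else 0)"
    proof cases
      case 1 then show ?thesis using d by (simp add: form[OF x y] actV_def FF_def)
    next
      case 2 then show ?thesis using d by (simp add: form[OF x y] actV_def FF_def brN_def)
    next
      case 3 then show ?thesis using s2 d
        by (simp add: form[OF x y] actV_def FF_def brN_def field_simps)
    next
      case 4 then show ?thesis using s2 d hb hcs
        by (cases "3 \<le> s") (auto simp: form[OF x y] actV_def FF_def brN_def field_simps)
    next
      case 5
      then have "i - Suc 0 \<noteq> 2" "i - Suc 0 \<noteq> Suc 0" "i \<noteq> 2" "i \<noteq> 3" "i \<noteq> 1" by auto
      then show ?thesis using s2 d
        by (simp add: form[OF x y] actV_def FF_def brN_def field_simps)
    qed
  qed
  then show "phiF (a+b) b d (ext_br s \<alpha> p p') = T (phiF (a+b) b d p) (phiF (a+b) b d p')"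
    using x y pxv pyw by (simp add: phiF_def ext_br_def hT)
qed




lemma part1:
  fixes \<alpha> :: "(nat \<Rightarrow> 'k::field) \<Rightarrow> (nat \<Rightarrow> 'k) \<Rightarrow> nat \<Rightarrow> 'k"
  assumes s2: "2 \<le> s" and sc: "special_cocycle s \<alpha>"
  shows "gl_isomorphic s (ext_br s \<alpha>) (sd_br s) \<or> (s = 3 \<and> gl_isomorphic s (ext_br s \<alpha>) L6_br)"
proof -
  define a where "a = \<alpha> eX eZ1 2"
  define b where "b = \<alpha> eX eZ2 3"
  define c where "c = \<alpha> eZ1 eZ2 3"
  have form: "\<And>x y i. x\<in>Nsp \<Longrightarrow> y\<in>Nsp \<Longrightarrow> \<alpha> x y i = (x 0 * y 1 - x 1 * y 0) * (if i = 2 then a else 0)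
     + (x 0 * y 2 - x 2 * y 0) * (if i = 3 then b else 0)
     + (x 1 * y 2 - x 2 * y 1) * (if i = 3 then c else 0)"
    unfolding a_def b_def c_def by (rule formula[OF sc])
  have hb: "s < 3 \<Longrightarrow> b = 0" unfolding b_def by (rule deg_vals(4)[OF sc])
  have hcs: "c \<noteq> 0 \<Longrightarrow> s = 3"
  proof -
    assume "c \<noteq> 0"
    moreover have "s < 3 \<Longrightarrow> c = 0" unfolding c_def by (rule deg_vals(5)[OF sc])
    moreover have "4 \<le> s \<Longrightarrow> c = 0" unfolding c_def by (rule c4[OF sc])
    ultimately show "s = 3" by linarith
  qed
  show ?thesis
  proof (cases "c = 0")
    case True
    have hT: "\<And>x v y w. x \<in> Nsp \<Longrightarrow> y \<in> Nsp \<Longrightarrow> sd_br s (x,v) (y,w) = (brN x y,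
      \<lambda>i. actV s x w i - actV s y v i + (if i = 3 then (x 1 * y 2 - x 2 * y 1) * (c / 1) else 0))"
      unfolding True by (auto simp: sd_br_def ext_br_def vzero_def intro!: ext)
    have "gl_iso s (ext_br s \<alpha>) (sd_br s) (phiF (a+b) b 1)"
      by (rule iso_gen[OF s2 _ br_comp[OF s2 _ form hb hcs hT]]) simp_all
    then show ?thesis unfolding gl_isomorphic_def by blast
  next
    case False
    then have s3: "s = 3" using hcs by simp
    have hT: "\<And>x v y w. x \<in> Nsp \<Longrightarrow> y \<in> Nsp \<Longrightarrow> L6_br (x,v) (y,w) = (brN x y,
      \<lambda>i. actV s x w i - actV s y v i + (if i = 3 then (x 1 * y 2 - x 2 * y 1) * (c / c) else 0))"
    proof -
      fix x v y w
      show "L6_br (x,v) (y,w) = (brN x y,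
      \<lambda>i. actV s x w i - actV s y v i + (if i = 3 then (x 1 * y 2 - x 2 * y 1) * (c / c) else 0))"
        using False s3 by (auto simp: L6_br_def brN_def actV_def intro!: ext)
    qed
    have "gl_iso s (ext_br s \<alpha>) L6_br (phiF (a+b) b c)"
      by (rule iso_gen[OF s2 False br_comp[OF s2 False form hb hcs hT]])
    then show ?thesis unfolding gl_isomorphic_def using s3 by blast
  qed
qed

definition alpha0 :: "(nat \<Rightarrow> 'k::field) \<Rightarrow> (nat \<Rightarrow> 'k) \<Rightarrow> nat \<Rightarrow> 'k" where
  "alpha0 x y = (\<lambda>i. if i = 3 then x 1 * y 2 - x 2 * y 1 else 0)"

lemma alpha0_sc: "special_cocycle 3 (alpha0 :: (nat \<Rightarrow> 'k::field) \<Rightarrow> _)"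
  unfolding special_cocycle_def
proof (intro conjI)
  show "\<forall>x\<in>Nsp. \<forall>y\<in>Nsp. (alpha0 x y :: nat \<Rightarrow> 'k) \<in> Vsp 3" by (simp add: alpha0_def Vsp_def)
  show "\<forall>x\<in>Nsp. \<forall>y\<in>Nsp. \<forall>z\<in>Nsp. (alpha0 (vadd x y) z :: nat \<Rightarrow> 'k) = vadd (alpha0 x z) (alpha0 y z)"
    by (auto simp: alpha0_def vadd_def algebra_simps intro!: ext)
  show "\<forall>a. \<forall>x\<in>Nsp. \<forall>z\<in>Nsp. (alpha0 (vsmul a x) z :: nat \<Rightarrow> 'k) = vsmul a (alpha0 x z)"
    by (auto simp: alpha0_def vsmul_def algebra_simps intro!: ext)
  show "\<forall>x\<in>Nsp. \<forall>y\<in>Nsp. \<forall>z\<in>Nsp. (alpha0 z (vadd x y) :: nat \<Rightarrow> 'k) = vadd (alpha0 z x) (alpha0 z y)"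
    by (auto simp: alpha0_def vadd_def algebra_simps intro!: ext)
  show "\<forall>a. \<forall>x\<in>Nsp. \<forall>z\<in>Nsp. (alpha0 z (vsmul a x) :: nat \<Rightarrow> 'k) = vsmul a (alpha0 z x)"
    by (auto simp: alpha0_def vsmul_def algebra_simps intro!: ext)
  show "\<forall>x\<in>Nsp. (alpha0 x x :: nat \<Rightarrow> 'k) = vzero"
    by (auto simp: alpha0_def vzero_def algebra_simps intro!: ext)
  show "\<forall>d1 d2 x y. x \<in> homN d1 \<longrightarrow> y \<in> homN d2 \<longrightarrow> (alpha0 x y :: nat \<Rightarrow> 'k) \<in> homV 3 (d1 + d2)"
  proof (intro allI impI)
    fix d1 d2 and x y :: "nat \<Rightarrow> 'k"
    assume x: "x \<in> homN d1" and y: "y \<in> homN d2"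
    show "alpha0 x y \<in> homV 3 (d1 + d2)"
      unfolding homV_def
    proof (intro CollectI conjI allI impI)
      show "alpha0 x y \<in> Vsp 3" by (simp add: alpha0_def Vsp_def)
      fix i assume ne: "alpha0 x y i \<noteq> 0"
      then have i3: "i = 3" and "x 1 * y 2 \<noteq> 0 \<or> x 2 * y 1 \<noteq> 0"
        by (auto simp: alpha0_def split: if_splits)
      then have "(x 1 \<noteq> 0 \<and> y 2 \<noteq> 0) \<or> (x 2 \<noteq> 0 \<and> y 1 \<noteq> 0)" by auto
      then have "d1 + d2 = -3"
      proof
        assume h: "x 1 \<noteq> 0 \<and> y 2 \<noteq> 0"
        then have "degN 1 = d1" "degN 2 = d2" using x y unfolding homN_def by blast+
        then show ?thesis by (simp add: degN_def)
      next
        assume h: "x 2 \<noteq> 0 \<and> y 1 \<noteq> 0"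
        then have "degN 2 = d1" "degN 1 = d2" using x y unfolding homN_def by blast+
        then show ?thesis by (simp add: degN_def)
      qed
      then show "degV i = d1 + d2" using i3 by (simp add: degV_def)
    qed
  qed
  show "\<forall>x\<in>Nsp. \<forall>y\<in>Nsp. \<forall>z\<in>Nsp.
        (\<lambda>i. actV 3 x (alpha0 y z) i - actV 3 y (alpha0 x z) i + actV 3 z (alpha0 x y) i
             - alpha0 (brN x y) z i + alpha0 (brN x z) y i - alpha0 (brN y z) x i) = (vzero :: nat \<Rightarrow> 'k)"
    by (auto simp: alpha0_def actV_def brN_def vzero_def algebra_simps intro!: ext)
qed

lemma alpha0_L6: "ext_br 3 alpha0 = (L6_br :: _ \<Rightarrow> _ \<Rightarrow> (nat \<Rightarrow> 'k::field) \<times> _)"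
  by (auto simp: ext_br_def L6_br_def alpha0_def actV_def brN_def intro!: ext)

lemma id_iso: "gl_iso s br br id"
  by (simp add: gl_iso_def)




lemma sd_u: "sd_br 3 (eZ2, vzero) (y, w) = ((\<lambda>i. 0), (\<lambda>i. 0))"
  by (auto simp: sd_br_def ext_br_def brN_def actV_def eZ2_def vzero_def intro!: ext)

lemma not_iso:
  "\<not> gl_isomorphic 3 (L6_br :: _ \<Rightarrow> _ \<Rightarrow> (nat \<Rightarrow> 'k::field) \<times> _) (sd_br 3)"
proof
  assume "gl_isomorphic 3 (L6_br :: _ \<Rightarrow> _ \<Rightarrow> (nat \<Rightarrow> 'k::field) \<times> _) (sd_br 3)"
  then obtain \<phi> :: "(nat \<Rightarrow> 'k) \<times> (nat \<Rightarrow> 'k) \<Rightarrow> (nat \<Rightarrow> 'k) \<times> (nat \<Rightarrow> 'k)"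
    where iso: "gl_iso 3 L6_br (sd_br 3) \<phi>" unfolding gl_isomorphic_def by blast
  have bij: "bij_betw \<phi> (Msp 3) (Msp 3)"
    and sm: "\<forall>a. \<forall>p\<in>Msp 3. \<phi> (psmul a p) = psmul a (\<phi> p)"
    and hom: "\<forall>d. \<forall>p\<in>homM 3 d. \<phi> p \<in> homM 3 d"
    and br: "\<forall>p\<in>Msp 3. \<forall>q\<in>Msp 3. \<phi> (L6_br p q) = sd_br 3 (\<phi> p) (\<phi> q)"
    using iso unfolding gl_iso_def by blast+
  define z0 :: "(nat \<Rightarrow> 'k) \<times> (nat \<Rightarrow> 'k)" where "z0 = ((\<lambda>i. 0), (\<lambda>i. 0))"
  have z0M: "z0 \<in> Msp 3" by (simp add: z0_def Msp_def Nsp_def Vsp_def)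
  have ps0: "psmul 0 p = z0" for p :: "(nat \<Rightarrow> 'k) \<times> (nat \<Rightarrow> 'k)"
    by (simp add: psmul_def vsmul_def z0_def)
  have phz: "\<phi> z0 = z0" using sm z0M ps0 by metis
  define u :: "(nat \<Rightarrow> 'k) \<times> (nat \<Rightarrow> 'k)" where "u = (eZ2, vzero)"
  have uM: "u \<in> Msp 3" by (simp add: u_def Msp_def Vsp_def vzero_def)
  have "\<phi> ` Msp 3 = Msp 3" using bij by (simp add: bij_betw_def)
  then obtain p where pM: "p \<in> Msp 3" and pu: "\<phi> p = u" using uM by force
  have inj: "inj_on \<phi> (Msp 3)" using bij by (simp add: bij_betw_def)
  have L6M: "L6_br p' q \<in> Msp 3" for p' q :: "(nat \<Rightarrow> 'k) \<times> (nat \<Rightarrow> 'k)"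
    by (simp add: L6_br_def Let_def Msp_def Nsp_def Vsp_def)
  have cen: "L6_br p q = z0" if qM: "q \<in> Msp 3" for q
  proof -
    obtain y w where "\<phi> q = (y, w)" by (cases "\<phi> q")
    then have "\<phi> (L6_br p q) = z0" using br pM qM pu by (simp add: u_def sd_u z0_def)
    then have "\<phi> (L6_br p q) = \<phi> z0" using phz by simp
    then show ?thesis using inj L6M z0M by (meson inj_onD)
  qed
  obtain x v where pxv: "p = (x, v)" by (cases p)
  have xN: "x \<in> Nsp" and vV: "v \<in> Vsp 3" using pM pxv by (auto simp: Msp_def)
  define dl :: "nat \<Rightarrow> 'k" where "dl = (\<lambda>i. if i = 1 then 1 else 0)"
  have c1: "L6_br p (eX, vzero) = z0" by (rule cen) (simp add: Msp_def e_Nsp Vsp_def vzero_def)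
  have c2: "L6_br p (eZ1, vzero) = z0" by (rule cen) (simp add: Msp_def e_Nsp Vsp_def vzero_def)
  have c3: "L6_br p ((\<lambda>i. 0), dl) = z0" by (rule cen) (simp add: Msp_def Nsp_def Vsp_def dl_def)
  have "fst (L6_br p (eX, vzero)) 2 = 0" "snd (L6_br p (eX, vzero)) 2 = 0" "snd (L6_br p (eX, vzero)) 3 = 0"
    using c1 by (simp_all add: z0_def)
  then have e1: "x 1 = 0" "v 1 = 0" "v 2 = 0"
    by (simp_all add: L6_br_def pxv eX_def vzero_def)
  have "fst (L6_br p (eZ1, vzero)) 2 = 0" "snd (L6_br p (eZ1, vzero)) 3 = 0"
    using c2 by (simp_all add: z0_def)
  then have e2: "x 0 = 0" "x 2 = 0"
    using e1 by (simp_all add: L6_br_def pxv eZ1_def vzero_def)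
  define e3 :: "(nat \<Rightarrow> 'k) \<times> (nat \<Rightarrow> 'k)" where "e3 = ((\<lambda>i. 0), (\<lambda>i. if i = 3 then 1 else 0))"
  have pe: "p = psmul (v 3) e3"
  proof -
    have "x = (\<lambda>i. 0)"
    proof
      fix i show "x i = 0" using xN e2 e1 by (cases "i = 0 \<or> i = 1 \<or> i = 2") (auto simp: Nsp_iff)
    qed
    moreover have "v = (\<lambda>i. v 3 * (if i = 3 then 1 else 0))"
    proof
      fix i show "v i = v 3 * (if i = 3 then 1 else 0)" using vV e1
        by (cases "i = 0 \<or> i = 1 \<or> i = 2 \<or> i = 3") (auto simp: Vsp_iff)
    qed
    ultimately show ?thesis by (simp add: pxv psmul_def vsmul_def e3_def)
  qed
  have e3M: "e3 \<in> Msp 3" by (simp add: e3_def Msp_def Nsp_def Vsp_def)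
  have "e3 \<in> homM 3 (-3)" by (simp add: e3_def homM_def homN_def homV_def Nsp_def Vsp_def degV_def)
  then have "\<phi> e3 \<in> homM 3 (-3)" using hom by blast
  then have f0: "fst (\<phi> e3) i = 0" for i by (cases "i = 2") (auto simp: homM_def homN_def degN_def split: if_splits)
  have "\<phi> p = psmul (v 3) (\<phi> e3)" using pe sm e3M by simp
  then have "fst (\<phi> p) 2 = 0" using f0 by (simp add: psmul_def vsmul_def)
  then show False using pu by (simp add: u_def eZ2_def)
qed

theorem mainTheorem8:
  fixes s :: nat
  assumes "2 \<le> s"
  shows "(\<forall>\<alpha> :: (nat \<Rightarrow> 'k::field_char_0) \<Rightarrow> (nat \<Rightarrow> 'k) \<Rightarrow> nat \<Rightarrow> 'k.
            special_cocycle s \<alpha> \<longrightarrow>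
              gl_isomorphic s (ext_br s \<alpha>) (sd_br s) \<or>
              (s = 3 \<and> gl_isomorphic s (ext_br s \<alpha>) L6_br)) \<and>
         (s = 3 \<longrightarrow> \<not> gl_isomorphic s (L6_br :: _ \<Rightarrow> _ \<Rightarrow> (nat \<Rightarrow> 'k) \<times> _) (sd_br s)) \<and>
         (s = 3 \<longrightarrow> (\<exists>\<alpha> :: (nat \<Rightarrow> 'k) \<Rightarrow> (nat \<Rightarrow> 'k) \<Rightarrow> nat \<Rightarrow> 'k.
            special_cocycle s \<alpha> \<and> gl_isomorphic s (ext_br s \<alpha>) L6_br))"
proof (intro conjI allI impI)
  fix \<alpha> :: "(nat \<Rightarrow> 'k::field_char_0) \<Rightarrow> (nat \<Rightarrow> 'k) \<Rightarrow> nat \<Rightarrow> 'k"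
  assume "special_cocycle s \<alpha>"
  then show "gl_isomorphic s (ext_br s \<alpha>) (sd_br s) \<or> (s = 3 \<and> gl_isomorphic s (ext_br s \<alpha>) L6_br)"
    using part1 assms by blast
next
  assume "s = 3"
  then show "\<not> gl_isomorphic s (L6_br :: _ \<Rightarrow> _ \<Rightarrow> (nat \<Rightarrow> 'k) \<times> _) (sd_br s)"
    using not_iso by blast
next
  assume s3: "s = 3"
  have "special_cocycle s (alpha0 :: (nat \<Rightarrow> 'k) \<Rightarrow> _)" using s3 alpha0_sc by simp
  moreover have "gl_isomorphic s (ext_br s (alpha0 :: (nat \<Rightarrow> 'k) \<Rightarrow> _)) L6_br"
    unfolding gl_isomorphic_def using s3 alpha0_L6 id_iso by metis
  ultimately show "\<exists>\<alpha> :: (nat \<Rightarrow> 'k) \<Rightarrow> (nat \<Rightarrow> 'k) \<Rightarrow> nat \<Rightarrow> 'k.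
            special_cocycle s \<alpha> \<and> gl_isomorphic s (ext_br s \<alpha>) L6_br" by blast
qed


end
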